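(* Let $A\in\mathcal X$ be such that there exist linearly independent $v_1,\dots,v_n\in\mathbb Z^n$ with $\mathcal S_1(A)=\{\pm v_1,\dots,\pm v_n\}$, let $B$ be the matrix with columns $v_1,\dots,v_n$, and define $g_2:\mathbb R^{n-1}\to S_n$ by $g_2(x)=A\,B\,D(x)\,B^{-1}$, where for $x=(a_1,\dots,a_{n-1})$, $D(x)=\mathrm{diag}(e^{a_1},\dots,e^{a_{n-1}},e^{-a_1-\dots-a_{n-1}})$. Then there is $\epsilon>0$ such that for all $x$ with $|x|<\epsilon$: $g_2(x)\in\mathcal X$ if and only if $x=0$; and if moreover $x\neq0$ and $v\in\mathcal S_1(g_2(x))$, then $\lim_{t\to\infty}l_v(g_2(tx))=0$.
   Context: $S_n=\mathrm{SO}_n\backslash\mathrm{SL}_n\mathbb R$; a point is represented by a matrix up to left $\mathrm{SO}_n$ (here $A$ denotes a representative in $\mathrm{SL}_n\mathbb R$; $ABD(x)B^{-1}\in\mathrm{SL}_n\mathbb R$). For $v\in\mathbb R^n$, $l_v(A)=|Av|$. $\mathrm{syst}_1(A)=\min_{v\in\mathbb Z^n\setminus\{0\}}|Av|$, $\mathcal S_1(A)=\{v\in\mathbb Z^n:|Av|=\mathrm{syst}_1(A)\}$; $A$ is well-rounded if $\mathcal S_1(A)$ spans $\mathbb R^n$, and $\mathcal X$ is the set of well-rounded points. *)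

theory Defs
  imports "HOL-Analysis.Analysis"
begin

text \<open>Dimension n is encoded by the index type 'm + unit (so n = CARD('m) + 1 \<ge> 2);
  the index Inr () is the last coordinate.  Matrices are real^'n^'n (rows, columns).\<close>

definition int_vecs :: "(real^'n) set" where
  "int_vecs = {v. \<forall>i. v $ i \<in> \<int>}"

definition l_v :: "real^'n^'n \<Rightarrow> real^'n \<Rightarrow> real" where
  "l_v A v = norm (A *v v)"

definition syst1 :: "real^'n^'n \<Rightarrow> real" where
  "syst1 A = Inf {norm (A *v v) | v. v \<in> int_vecs \<and> v \<noteq> 0}"

definition S1 :: "real^'n^'n \<Rightarrow> (real^'n) set" where
  "S1 A = {v \<in> int_vecs. norm (A *v v) = syst1 A}"

definition well_rounded :: "real^'n^'n \<Rightarrow> bool" where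
  "well_rounded A \<longleftrightarrow> span (S1 A) = UNIV"

definition WR :: "(real^'n^'n) set" where
  "WR = {A. det A = 1 \<and> well_rounded A}"

definition diagD :: "real^'m \<Rightarrow> real^('m + unit)^('m + unit)" where
  "diagD x = (\<chi> i j. if i = j then
      (case i of Inl k \<Rightarrow> exp (x $ k) | Inr _ \<Rightarrow> exp (- (\<Sum>k\<in>UNIV. x $ k))) else 0)"

definition col_matrix :: "('n \<Rightarrow> real^'n) \<Rightarrow> real^'n^'n" where
  "col_matrix v = (\<chi> i j. v j $ i)"

definition g2 :: "real^('m+unit)^('m+unit) \<Rightarrow> (('m+unit) \<Rightarrow> real^('m+unit)) \<Rightarrow> real^'m
    \<Rightarrow> real^('m+unit)^('m+unit)" where
  "g2 A v x = A ** col_matrix v ** diagD x ** matrix_inv (col_matrix v)"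

end

theory Submission
  imports Defs
begin

lemma minv: assumes "invertible (M::real^'n^'n)"
  shows "M ** matrix_inv M = mat 1" "matrix_inv M ** M = mat 1"
proof -
  from assms obtain M' where "M ** M' = mat 1 \<and> M' ** M = mat 1" unfolding invertible_def by blast
  hence "M ** matrix_inv M = mat 1 \<and> matrix_inv M ** M = mat 1"
    unfolding matrix_inv_def by (rule someI)
  thus "M ** matrix_inv M = mat 1" "matrix_inv M ** M = mat 1" by auto
qed

lemma mat_bound: "\<exists>K>0. \<forall>u. norm ((M::real^'n^'n) *v u) \<le> K * norm u"
  using linear_bounded_pos[OF matrix_vector_mul_linear] by metis

lemma inv_bound: assumes "invertible (M::real^'n^'n)"
  shows "\<exists>K>0. \<forall>u. norm u \<le> K * norm (M *v u)"
proof -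
  obtain K where K: "K>0" "\<forall>u. norm (matrix_inv M *v u) \<le> K * norm u" using mat_bound by blast
  have "norm u \<le> K * norm (M *v u)" for u
  proof -
    have "u = matrix_inv M *v (M *v u)"
      by (simp add: matrix_vector_mul_assoc minv(2)[OF assms])
    thus ?thesis using K(2) by metis
  qed
  thus ?thesis using K(1) by blast
qed

lemma inv_ker: assumes "invertible (M::real^'n^'n)" "u \<noteq> 0" shows "M *v u \<noteq> 0"
  using inv_bound[OF assms(1)] assms(2) by (metis mult_zero_right norm_le_zero_iff norm_zero)

lemma finite_int_ball: "finite {w::real^'n. w \<in> int_vecs \<and> norm w \<le> R}"
proof -
  let ?F = "(\<lambda>f. \<chi> i. real_of_int (f i)) ` (PiE UNIV (\<lambda>_::'n. {-\<lceil>R\<rceil>..\<lceil>R\<rceil>}))"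
  have "finite ?F" by (intro finite_imageI finite_PiE) auto
  moreover have "{w::real^'n. w \<in> int_vecs \<and> norm w \<le> R} \<subseteq> ?F"
  proof
    fix w :: "real^'n" assume w: "w \<in> {w. w \<in> int_vecs \<and> norm w \<le> R}"
    have wi: "of_int \<lfloor>w $ i\<rfloor> = w $ i" for i
      using w unfolding int_vecs_def by (auto elim!: Ints_cases)
    have "\<bar>w $ i\<bar> \<le> R" for i using w component_le_norm_cart[of w i] by auto
    hence "\<lfloor>w $ i\<rfloor> \<in> {-\<lceil>R\<rceil>..\<lceil>R\<rceil>}" for i
    proof -
      have a: "\<bar>w $ i\<bar> \<le> R" by fact
      have "\<lfloor>-R\<rfloor> \<le> \<lfloor>w $ i\<rfloor>" using a by (intro floor_mono) auto
      moreover have "real_of_int \<lfloor>w $ i\<rfloor> \<le> real_of_int \<lceil>R\<rceil>"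
        using a of_int_floor_le[of "w$i"] le_of_int_ceiling[of R] by linarith
      ultimately show ?thesis by (simp add: ceiling_def)
    qed
    hence "(\<lambda>i. \<lfloor>w $ i\<rfloor>) \<in> PiE UNIV (\<lambda>_::'n. {-\<lceil>R\<rceil>..\<lceil>R\<rceil>})" by auto
    moreover have "w = (\<chi> i. real_of_int (\<lfloor>w $ i\<rfloor>))" by (simp only: vec_eq_iff vec_lambda_beta wi) simp
    ultimately show "w \<in> ?F" by (rule rev_image_eqI[where f="\<lambda>f. \<chi> i. real_of_int (f i)"])
  qed
  ultimately show ?thesis by (rule finite_subset[rotated])
qed

lemma norm_comp_bound:
  fixes c :: "real^'n"
  assumes "\<And>i. \<bar>a i\<bar> \<le> e"
  shows "norm (\<chi> i. a i * c $ i) \<le> e * norm c"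
proof -
  have e: "0 \<le> e" using assms[of undefined] by linarith
  have "norm (\<chi> i. a i * c $ i) = L2_set (\<lambda>i. \<bar>a i * c $ i\<bar>) UNIV"
    by (simp add: norm_vec_def)
  also have "\<dots> \<le> L2_set (\<lambda>i. e * \<bar>c $ i\<bar>) UNIV"
    by (rule L2_set_mono) (auto simp: abs_mult intro: mult_right_mono assms)
  also have "\<dots> = e * norm c"
    by (simp add: norm_vec_def L2_set_right_distrib[OF e])
  finally show ?thesis .
qed

definition yv :: "real^'m \<Rightarrow> real^('m+unit)" where
  "yv x = (\<chi> i. case i of Inl k \<Rightarrow> x$k | Inr _ \<Rightarrow> -(\<Sum>k\<in>UNIV. x$k))"

lemma diagD_eq: "diagD x = (\<chi> i j. if i = j then exp (yv x $ i) else 0)"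
  by (simp add: diagD_def yv_def vec_eq_iff split: sum.split)

lemma diagD_mult: "diagD x *v c = (\<chi> i. exp (yv x $ i) * c $ i)"
proof -
  have ifm: "(if P then (a::real) else 0) * b = (if P then a * b else 0)" for P a b by simp
  show ?thesis by (simp add: diagD_eq matrix_vector_mult_def vec_eq_iff ifm)
qed

lemma sum_plus_univ: "(\<Sum>i\<in>(UNIV::('m::finite+unit) set). f i) = (\<Sum>k\<in>UNIV. f (Inl k)) + f (Inr ())"
proof -
  have "(\<Sum>i\<in>(UNIV::('m::finite+unit) set). f i) = sum f (UNIV <+> UNIV)" by (simp add: UNIV_Plus_UNIV)
  also have "\<dots> = (\<Sum>k\<in>UNIV. f (Inl k)) + (\<Sum>u\<in>(UNIV::unit set). f (Inr u))" by (subst sum.Plus) auto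
  finally show ?thesis by (simp add: UNIV_unit)
qed

lemma yv_sum: "(\<Sum>i\<in>UNIV. yv x $ i) = 0"
  by (simp add: sum_plus_univ yv_def)

lemma yv_scale: "yv (t *\<^sub>R x) = t *\<^sub>R yv x"
  by (simp add: yv_def vec_eq_iff sum_distrib_left split: sum.split)

lemma yv_zero: "yv x = 0 \<Longrightarrow> x = 0"
proof -
  assume "yv x = 0"
  hence "yv x $ Inl k = 0" for k by simp
  thus "x = 0" by (simp add: yv_def vec_eq_iff)
qed

lemma yv_bound: "\<bar>yv (x::real^'m::finite) $ i\<bar> \<le> (real CARD('m) + 1) * norm x"
proof (cases i)
  case (Inl k)
  have "\<bar>x $ k\<bar> \<le> norm x" by (rule component_le_norm_cart)
  thus ?thesis using Inl by (simp add: yv_def algebra_simps) (smt (verit) mult_nonneg_nonneg norm_ge_zero of_nat_0_le_iff)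
next
  case (Inr u)
  have "\<bar>\<Sum>k\<in>UNIV. x$k\<bar> \<le> (\<Sum>k\<in>(UNIV::'m set). \<bar>x$k\<bar>)" by (rule sum_abs)
  also have "\<dots> \<le> (\<Sum>k\<in>(UNIV::'m set). norm x)" by (intro sum_mono component_le_norm_cart)
  also have "\<dots> = real CARD('m) * norm x" by simp
  finally have "\<bar>\<Sum>k\<in>UNIV. x$k\<bar> \<le> real CARD('m) * norm x" .
  thus ?thesis using Inr by (simp add: yv_def distrib_right) (smt (verit) norm_ge_zero)
qed

lemma exp_abs_bound: "\<bar>exp (y::real) - 1\<bar> \<le> exp \<bar>y\<bar> - 1"
proof (cases "y \<ge> 0")
  case True
  hence "1 \<le> exp y" by simp
  thus ?thesis using True by simp
next
  case False
  have "1 + y \<le> exp y" using exp_ge_add_one_self[of y] by simp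
  moreover have "1 + (-y) \<le> exp (-y)" using exp_ge_add_one_self[of "-y"] by simp
  moreover have "exp y \<le> 1" using False by simp
  moreover have "\<bar>y\<bar> = -y" "\<bar>exp y - 1\<bar> = 1 - exp y" using False \<open>exp y \<le> 1\<close> by auto
  ultimately show ?thesis by linarith
qed

lemma col_axis: "col_matrix v *v axis i 1 = v i"
  by (simp add: matrix_vector_mult_basis column_def col_matrix_def vec_eq_iff)

lemma col_inv: assumes "inj v" "independent (range v)"
  shows "invertible (col_matrix (v::'n::finite \<Rightarrow> real^'n))"
proof -
  have "\<forall>c. (\<Sum>i\<in>UNIV. c i *s column i (col_matrix v)) = 0 \<longrightarrow> (\<forall>i. c i = 0)"
  proof (intro allI impI)
    fix c :: "'n \<Rightarrow> real" and i
    assume h: "(\<Sum>i\<in>UNIV. c i *s column i (col_matrix v)) = 0"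
    have col: "column i (col_matrix v) = v i" for i
      by (simp add: column_def col_matrix_def vec_eq_iff)
    have "(\<Sum>w\<in>range v. c (inv v w) *\<^sub>R w) = (\<Sum>i\<in>UNIV. c (inv v (v i)) *\<^sub>R v i)"
      using sum.reindex[of v UNIV "\<lambda>w. c (inv v w) *\<^sub>R w"] assms(1) by (simp add: comp_def)
    also have "\<dots> = (\<Sum>i\<in>UNIV. c i *s column i (col_matrix v))"
      using assms(1) by (simp add: col scalar_mult_eq_scaleR)
    finally have "(\<Sum>w\<in>range v. c (inv v w) *\<^sub>R w) = 0" using h by simp
    hence "c (inv v (v i)) = 0"
      using assms(2)[unfolded independent_explicit_module, rule_format,
          of "range v" "\<lambda>w. c (inv v w)" "v i"] by simp
    thus "c i = 0" using assms(1) by simp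
  qed
  thus ?thesis unfolding invertible_left_inverse matrix_left_invertible_independent_columns .
qed

theorem mainTheorem12:
  fixes A :: "real^('m::finite + unit)^('m + unit)"
    and v :: "('m + unit) \<Rightarrow> real^('m + unit)"
  assumes "A \<in> WR"
    and "\<And>i. v i \<in> int_vecs"
    and "inj v" and "independent (range v)"
    and "S1 A = {w. \<exists>i. w = v i \<or> w = - v i}"
  shows "\<exists>\<epsilon>>0. \<forall>x::real^'m. norm x < \<epsilon> \<longrightarrow>
           ((g2 A v x \<in> WR \<longleftrightarrow> x = 0) \<and>
            (x \<noteq> 0 \<longrightarrow> (\<forall>w\<in>S1 (g2 A v x).
               ((\<lambda>t::real. l_v (g2 A v (t *\<^sub>R x)) w) \<longlongrightarrow> 0) at_top)))"
proof -
  define B where "B = col_matrix v"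
  define Bi where "Bi = matrix_inv B"
  define s where "s = syst1 A"
  have Binv: "invertible B" using col_inv assms(3,4) B_def by blast
  have BBi: "B ** Bi = mat 1" and BiB: "Bi ** B = mat 1" using minv[OF Binv] Bi_def by auto
  have Ainv: "invertible A" using assms(1) by (simp add: WR_def invertible_det_nz)
  have Bax: "B *v axis i 1 = v i" for i using col_axis B_def by simp
  have Biv: "Bi *v v i = axis i 1" for i
    by (metis Bax BiB matrix_vector_mul_assoc matrix_vector_mul_lid)
  have g2w: "g2 A v x *v w = (A ** B) *v (diagD x *v (Bi *v w))" for x w
    by (simp add: g2_def B_def Bi_def flip: matrix_vector_mul_assoc)
  have g2v: "g2 A v x *v v i = exp (yv x $ i) *\<^sub>R (A *v v i)" for x i
  proof -
    have "diagD x *v axis i 1 = exp (yv x $ i) *\<^sub>R axis i 1"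
      by (simp add: diagD_mult vec_eq_iff axis_def)
    hence "g2 A v x *v v i = (A ** B) *v (exp (yv x $ i) *\<^sub>R axis i 1)"
      by (simp only: g2w Biv)
    also have "\<dots> = exp (yv x $ i) *\<^sub>R (A *v (B *v axis i 1))"
      by (simp only: matrix_vector_mult_scaleR flip: matrix_vector_mul_assoc)
    finally show ?thesis by (simp only: Bax)
  qed
  have g2vn: "norm (g2 A v x *v v i) = exp (yv x $ i) * norm (A *v v i)"
    "norm (g2 A v x *v (- v i)) = exp (yv x $ i) * norm (A *v v i)" for x i
    using g2v[of x i] by (simp_all add: vec.neg)
  have vS1: "v i \<in> S1 A" for i by (subst assms(5)) blast
  have vnz: "v i \<noteq> 0" for i
  proof
    assume "v i = 0" hence "0 \<in> range v" by (metis rangeI)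
    thus False using assms(4) dependent_zero by blast
  qed
  have s_eq: "norm (A *v v i) = s" for i using vS1[of i] unfolding S1_def s_def by blast
  have spos: "s > 0" using inv_ker[OF Ainv vnz] s_eq by (metis zero_less_norm_iff)
  have slow: "s \<le> norm (A *v w)" if "w \<in> int_vecs" "w \<noteq> 0" for w
    unfolding s_def syst1_def
  proof (rule cInf_lower)
    show "norm (A *v w) \<in> {norm (A *v v) |v. v \<in> int_vecs \<and> v \<noteq> 0}" using that by blast
    show "bdd_below {norm (A *v v) |v. v \<in> int_vecs \<and> v \<noteq> 0}" by (rule bdd_belowI[of _ 0]) auto
  qed
  have S1A: "\<exists>i. w = v i \<or> w = - v i" if "w \<in> int_vecs" "norm (A *v w) = s" for w
  proof -
    have "w \<in> S1 A" using that unfolding S1_def s_def by blast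
    thus ?thesis using assms(5) by blast
  qed
  obtain s' where s's: "s' > s" and s'le: "\<And>w. w \<in> int_vecs \<Longrightarrow> w \<noteq> 0 \<Longrightarrow>
      (\<forall>i. w \<noteq> v i \<and> w \<noteq> - v i) \<Longrightarrow> s' \<le> norm (A *v w)"
  proof -
    obtain KA where KA: "KA > 0" "\<And>u. norm u \<le> KA * norm (A *v u)" using inv_bound[OF Ainv] by blast
    define F where "F = {w. w \<in> int_vecs \<and> norm w \<le> KA * (2 * s)} \<inter>
       {w. w \<noteq> 0 \<and> (\<forall>i. w \<noteq> v i \<and> w \<noteq> - v i) \<and> norm (A *v w) \<le> 2 * s}"
    have finF: "finite F" unfolding F_def by (intro finite_Int disjI1 finite_int_ball)
    have Fgt: "s < norm (A *v w)" if "w \<in> F" for w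
    proof -
      have "s \<le> norm (A *v w)" using that slow unfolding F_def by blast
      moreover have "norm (A *v w) \<noteq> s" using that S1A unfolding F_def by blast
      ultimately show ?thesis by simp
    qed
    define s' where "s' = Min (insert (2 * s) ((\<lambda>w. norm (A *v w)) ` F))"
    have "s < s'" unfolding s'_def using finF Fgt spos by (subst Min_gr_iff) auto
    moreover have "s' \<le> norm (A *v w)" if "w \<in> int_vecs" "w \<noteq> 0"
      "\<forall>i. w \<noteq> v i \<and> w \<noteq> - v i" for w
    proof (cases "norm (A *v w) \<le> 2 * s")
      case True
      have "norm w \<le> KA * (2 * s)" using KA True
        by (meson dual_order.trans mult_left_mono less_imp_le)
      hence "w \<in> F" using that True unfolding F_def by blast
      thus ?thesis unfolding s'_def using finF by (intro Min_le) auto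
    next
      case False
      have "s' \<le> 2 * s" unfolding s'_def using finF by (intro Min_le) auto
      thus ?thesis using False by simp
    qed
    ultimately show ?thesis using that by blast
  qed
  obtain KP where KP: "KP > 0" "\<And>u. norm ((A ** B) *v u) \<le> KP * norm u"
    using mat_bound by blast
  obtain KQ where KQ: "KQ > 0" "\<And>u. norm u \<le> KQ * norm ((A ** B) *v u)"
    using inv_bound[OF invertible_mult[OF Ainv Binv]] by blast
  have s'pos: "s' > 0" using s's spos by simp
  define \<eta> where "\<eta> = (s' - s) / (2 * s' * KP * KQ)"
  have etapos: "\<eta> > 0" unfolding \<eta>_def using s's s'pos KP KQ by simp
  have etaK: "KP * \<eta> * KQ = (s' - s) / (2 * s')" unfolding \<eta>_def using KP KQ s'pos by (simp add: field_simps)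
  define Cy where "Cy = real CARD('m) + 1"
  have Cypos: "Cy > 0" unfolding Cy_def by simp
  define \<epsilon> where "\<epsilon> = ln (1 + \<eta>) / Cy"
  have epspos: "\<epsilon> > 0" unfolding \<epsilon>_def using etapos Cypos by simp
  have expb: "\<bar>exp (yv x $ i) - 1\<bar> \<le> \<eta>" if "norm x < \<epsilon>" for x :: "real^'m" and i
  proof -
    have "\<bar>yv x $ i\<bar> \<le> Cy * norm x" unfolding Cy_def using yv_bound[of x i] by simp
    also have "\<dots> < Cy * \<epsilon>" using that Cypos by simp
    also have "\<dots> = ln (1 + \<eta>)" unfolding \<epsilon>_def using Cypos by simp
    finally have "exp \<bar>yv x $ i\<bar> < exp (ln (1 + \<eta>))" by simp
    hence "exp \<bar>yv x $ i\<bar> < 1 + \<eta>" using etapos by simp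
    thus ?thesis using exp_abs_bound[of "yv x $ i"] by linarith
  qed
  have bigw: "s < norm (g2 A v x *v w)" if nx: "norm x < \<epsilon>" and w: "w \<in> int_vecs" "w \<noteq> 0"
      "\<forall>i. w \<noteq> v i \<and> w \<noteq> - v i" for x :: "real^'m" and w
  proof -
    define P where "P = A ** B"
    define c where "c = Bi *v w"
    define N where "N = norm (P *v c)"
    have wc: "w = B *v c" unfolding c_def by (simp add: matrix_vector_mul_assoc BBi)
    have AN: "norm (A *v w) = N" unfolding N_def P_def wc by (simp add: matrix_vector_mul_assoc)
    have Ns': "s' \<le> N" using s'le[OF w] AN by simp
    define d where "d = diagD x *v c - c"
    have dform: "d = (\<chi> i. (exp (yv x $ i) - 1) * c $ i)"
      unfolding d_def by (simp add: diagD_mult vec_eq_iff algebra_simps)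
    have nd: "norm d \<le> \<eta> * norm c" unfolding dform by (rule norm_comp_bound) (rule expb[OF nx])
    have nc: "norm c \<le> KQ * N" unfolding N_def P_def using KQ(2) .
    have g: "g2 A v x *v w = P *v c + P *v d"
      unfolding g2w P_def c_def d_def by (simp flip: vec.add)
    have "norm (P *v d) \<le> KP * norm d" unfolding P_def by (rule KP(2))
    also have "\<dots> \<le> KP * (\<eta> * (KQ * N))"
      using nd nc KP(1) etapos by (meson mult_left_mono order_trans less_imp_le)
    also have "\<dots> = (KP * \<eta> * KQ) * N" by (simp add: ac_simps)
    also have "\<dots> = (s' - s) / (2 * s') * N" by (simp only: etaK)
    finally have Pd: "norm (P *v d) \<le> (s' - s) / (2 * s') * N" .
    have "N \<le> norm (P *v c + P *v d) + norm (P *v d)"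
      unfolding N_def using norm_triangle_ineq4[of "P *v c + P *v d" "P *v d"] by simp
    hence gN: "norm (g2 A v x *v w) \<ge> N - (s' - s) / (2 * s') * N" using Pd unfolding g by linarith
    have fr: "(s' + s) / (2 * s') = 1 - (s' - s) / (2 * s')" using s'pos by (simp add: field_simps)
    have "N * ((s' + s) / (2 * s')) = N - (s' - s) / (2 * s') * N" unfolding fr by (simp add: algebra_simps)
    hence "norm (g2 A v x *v w) \<ge> N * ((s' + s) / (2 * s'))" using gN by linarith
    moreover have "N * ((s' + s) / (2 * s')) \<ge> s' * ((s' + s) / (2 * s'))"
      using Ns' s'pos spos by (intro mult_right_mono) auto
    moreover have "s' * ((s' + s) / (2 * s')) = (s' + s) / 2" using s'pos by simp
    ultimately have "s' * ((s' + s) / (2 * s')) \<le> norm (g2 A v x *v w)"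
      and "s' * ((s' + s) / (2 * s')) = (s' + s) / 2" by auto
    moreover have "s < (s' + s) / 2" using s's by simp
    ultimately show ?thesis by linarith
  qed
  have yv0: "yv (0::real^'m) = 0" by (simp add: yv_def vec_eq_iff split: sum.split)
  have diag0: "diagD (0::real^'m) = mat 1" by (simp add: diagD_eq mat_def vec_eq_iff yv_def split: sum.split)
  have g20: "g2 A v 0 = A"
  proof -
    have "g2 A v 0 = A ** B ** diagD 0 ** Bi" by (simp add: g2_def B_def Bi_def)
    also have "\<dots> = A ** (B ** Bi)" by (simp add: diag0 matrix_mul_rid matrix_mul_assoc)
    also have "\<dots> = A" by (simp add: BBi matrix_mul_rid)
    finally show ?thesis .
  qed
  have main: "(g2 A v x \<in> WR \<longleftrightarrow> x = 0) \<and> (x \<noteq> 0 \<longrightarrow> (\<forall>w\<in>S1 (g2 A v x).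
               ((\<lambda>t::real. l_v (g2 A v (t *\<^sub>R x)) w) \<longlongrightarrow> 0) at_top))"
    if nx: "norm x < \<epsilon>" for x :: "real^'m"
  proof -
    define y where "y = yv x"
    define m where "m = Min (range (\<lambda>i. y $ i))"
    have m_le: "m \<le> y $ i" for i unfolding m_def by (rule Min_le) auto
    have "m \<in> range (\<lambda>i. y $ i)" unfolding m_def by (rule Min_in) auto
    then obtain j where j: "y $ j = m" by auto
    have ysum: "(\<Sum>i\<in>UNIV. y $ i) = 0" unfolding y_def by (rule yv_sum)
    have cpos: "0 < real CARD('m + unit)" by simp
    have "(\<Sum>i\<in>(UNIV::('m+unit) set). m) \<le> (\<Sum>i\<in>UNIV. y $ i)" by (rule sum_mono) (rule m_le)
    hence "real CARD('m + unit) * m \<le> 0" using ysum by simp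
    hence mle0: "m \<le> 0" using cpos by (simp add: mult_le_0_iff)
    define M where "M = g2 A v x"
    have Mv: "norm (M *v v i) = exp (y $ i) * s" "norm (M *v (- v i)) = exp (y $ i) * s" for i
      unfolding M_def y_def using g2vn s_eq by auto
    have expm: "exp m \<le> 1" using mle0 by simp
    have Mlow: "exp m * s \<le> norm (M *v w) \<and> (norm (M *v w) = exp m * s \<longrightarrow>
        (\<exists>i. y $ i = m \<and> (w = v i \<or> w = - v i)))" if w: "w \<in> int_vecs" "w \<noteq> 0" for w
    proof (cases "\<exists>i. w = v i \<or> w = - v i")
      case True
      then obtain i where i: "w = v i \<or> w = - v i" by blast
      have nw: "norm (M *v w) = exp (y $ i) * s" using i Mv by auto
      have "exp m \<le> exp (y $ i)" using m_le by simp
      hence "exp m * s \<le> norm (M *v w)" using nw spos by (simp add: mult_right_mono)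
      moreover have "y $ i = m" if "norm (M *v w) = exp m * s"
        using that nw spos by simp
      ultimately show ?thesis using i by blast
    next
      case False
      hence "s < norm (M *v w)" unfolding M_def using bigw[OF nx w] by blast
      moreover have "exp m * s \<le> s" using expm spos by (simp add: mult_left_le_one_le)
      ultimately show ?thesis by simp
    qed
    have syst: "syst1 M = exp m * s"
      unfolding syst1_def
    proof (rule cInf_eq_minimum)
      show "exp m * s \<in> {norm (M *v w) |w. w \<in> int_vecs \<and> w \<noteq> 0}"
        using Mv(1)[of j] j assms(2)[of j] vnz[of j] by (metis (mono_tags, lifting) mem_Collect_eq)
      show "exp m * s \<le> z" if "z \<in> {norm (M *v w) |w. w \<in> int_vecs \<and> w \<noteq> 0}" for z
        using that Mlow by auto
    qed
    have S1M: "\<exists>i. y $ i = m \<and> (w = v i \<or> w = - v i)" if "w \<in> S1 M" for w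
    proof -
      have w: "w \<in> int_vecs" "norm (M *v w) = exp m * s" using that syst unfolding S1_def by auto
      have "w \<noteq> 0" using w(2) spos by auto
      thus ?thesis using Mlow[OF w(1)] w(2) by blast
    qed
    have mneg: "m < 0" if "x \<noteq> 0"
    proof (rule ccontr)
      assume "\<not> m < 0"
      hence ynn: "0 \<le> y $ i" for i using m_le[of i] by simp
      hence "\<forall>i\<in>UNIV. y $ i = 0" using ysum sum_nonneg_eq_0_iff[of UNIV "\<lambda>i. y $ i"] by simp
      hence "yv x = 0" unfolding y_def by (simp add: vec_eq_iff)
      thus False using yv_zero that by blast
    qed
    have P1: "g2 A v x \<in> WR \<longleftrightarrow> x = 0"
    proof
      assume "x = 0" thus "g2 A v x \<in> WR" using g20 assms(1) by simp
    next
      assume WRx: "g2 A v x \<in> WR"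
      show "x = 0"
      proof (rule ccontr)
        assume x0: "x \<noteq> 0"
        obtain j' where j': "y $ j' \<noteq> m"
        proof (rule ccontr)
          assume "\<not> thesis"
          hence "\<forall>i. y $ i = m" using that by blast
          hence "(\<Sum>i\<in>UNIV. y $ i) = real CARD('m + unit) * m" by simp
          hence "real CARD('m + unit) * m = 0" using ysum by simp
          thus False using cpos mneg[OF x0] by simp
        qed
        have sub: "S1 M \<subseteq> span (range v - {v j'})"
        proof
          fix w assume "w \<in> S1 M"
          then obtain i where i: "y $ i = m" "w = v i \<or> w = - v i" using S1M by blast
          have "i \<noteq> j'" using i j' by auto
          hence "v i \<noteq> v j'" using assms(3) by (auto simp: inj_def)
          hence "v i \<in> span (range v - {v j'})" by (intro span_base) auto
          thus "w \<in> span (range v - {v j'})" using i(2) span_neg by auto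
        qed
        have "span (S1 M) = UNIV" using WRx unfolding M_def WR_def well_rounded_def by simp
        moreover have "span (S1 M) \<subseteq> span (range v - {v j'})"
          by (rule span_minimal[OF sub subspace_span])
        ultimately have "v j' \<in> span (range v - {v j'})" by auto
        hence "dependent (range v)" unfolding dependent_def by blast
        thus False using assms(4) by blast
      qed
    qed
    have P2: "\<forall>w\<in>S1 (g2 A v x). ((\<lambda>t::real. l_v (g2 A v (t *\<^sub>R x)) w) \<longlongrightarrow> 0) at_top"
      if x0: "x \<noteq> 0"
    proof
      fix w assume "w \<in> S1 (g2 A v x)"
      then obtain i where i: "y $ i = m" "w = v i \<or> w = - v i" using S1M unfolding M_def by blast
      have eq: "(\<lambda>t::real. l_v (g2 A v (t *\<^sub>R x)) w) = (\<lambda>t. exp (m * t) * s)"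
      proof
        fix t :: real
        have "l_v (g2 A v (t *\<^sub>R x)) w = exp (yv (t *\<^sub>R x) $ i) * s"
          unfolding l_v_def using i(2) g2vn s_eq by auto
        also have "\<dots> = exp (m * t) * s" using i(1) unfolding y_def yv_scale by (simp add: mult.commute)
        finally show "l_v (g2 A v (t *\<^sub>R x)) w = exp (m * t) * s" .
      qed
      have "filterlim (\<lambda>t. m * t) at_bot at_top"
        by (rule filterlim_tendsto_neg_mult_at_bot[OF tendsto_const mneg[OF x0] filterlim_ident])
      hence "((\<lambda>t. exp (m * t)) \<longlongrightarrow> 0) at_top" by (rule filterlim_compose[OF exp_at_bot])
      hence "((\<lambda>t. exp (m * t) * s) \<longlongrightarrow> 0 * s) at_top" by (intro tendsto_mult tendsto_const)
      thus "((\<lambda>t::real. l_v (g2 A v (t *\<^sub>R x)) w) \<longlongrightarrow> 0) at_top" unfolding eq by simp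
    qed
    show ?thesis using P1 P2 by blast
  qed
  show ?thesis using epspos main by blast
qed

end
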